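(* For every $d\ge1$, each of the following polynomials is the $f$-polynomial of a simplicial complex: (a) the Eulerian polynomial $A_d(t)=\sum_{\pi\in S_d}t^{\mathrm{des}(\pi)}$; (b) the Stirling polynomial of the second kind $\sum_{k=0}^{d-1}S(d,k+1)\,t^k$; (c) the derangement polynomial $\sum_{k\ge0}D_{d,k}t^k$, where $D_{d,k}$ is the number of derangements of $[d+1]$ with exactly $k+1$ exceedances (equivalently, $D_{d,k}$ is determined by $D_{1,0}=1$, $D_{d,k}=0$ unless $0\le k\le d-1$, and $D_{d,k}=(k+1)D_{d-1,k}+(d-k)D_{d-1,k-1}+d\,D_{d-2,k-1}$ for $d\ge2$).
   Context: $S_d$ is the symmetric group on $[d]=\{1,\dots,d\}$; $\mathrm{des}(\pi)=\#\{i<d:\pi(i)>\pi(i+1)\}$. $S(d,m)$ is the number of set partitions of $[d]$ into $m$ blocks. A derangement is a permutation without fixed points; an exceedance of $\pi$ is an index $i$ with $\pi(i)>i$. The $f$-polynomial of a simplicial complex is $\sum_{i\ge0}f_{i-1}t^i$, where $f_{i-1}$ is the number of faces of cardinality $i$ (constant term $1$ for the empty face). *)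

theory Defs
  imports "HOL-Computational_Algebra.Polynomial" "HOL-Combinatorics.Combinatorics"
begin

definition simplicial_complex :: "nat set set \<Rightarrow> bool" where
  "simplicial_complex K \<longleftrightarrow> finite K \<and> {} \<in> K \<and> (\<forall>F\<in>K. finite F) \<and>
     (\<forall>F\<in>K. \<forall>G. G \<subseteq> F \<longrightarrow> G \<in> K)"

definition f_poly :: "nat set set \<Rightarrow> nat poly" where
  "f_poly K = (\<Sum>F\<in>K. monom 1 (card F))"

definition des :: "nat \<Rightarrow> (nat \<Rightarrow> nat) \<Rightarrow> nat" where
  "des d \<pi> = card {i. 1 \<le> i \<and> i < d \<and> \<pi> i > \<pi> (i + 1)}"

definition eulerian_poly :: "nat \<Rightarrow> nat poly" where
  "eulerian_poly d = (\<Sum>\<pi>\<in>{\<pi>. \<pi> permutes {1..d}}. monom 1 (des d \<pi>))"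

definition stirling2_poly :: "nat \<Rightarrow> nat poly" where
  "stirling2_poly d = (\<Sum>k<d. monom (Stirling d (k + 1)) k)"

definition exc :: "nat \<Rightarrow> (nat \<Rightarrow> nat) \<Rightarrow> nat" where
  "exc n \<pi> = card {i\<in>{1..n}. \<pi> i > i}"

definition derangement_num :: "nat \<Rightarrow> nat \<Rightarrow> nat" where
  "derangement_num d k = card {\<pi>. \<pi> permutes {1..d+1} \<and> (\<forall>i\<in>{1..d+1}. \<pi> i \<noteq> i)
                                 \<and> exc (d+1) \<pi> = k + 1}"

text \<open>A derangement of [d+1] has at most d exceedances, so k ranges over 0..d.\<close>
definition derangement_poly :: "nat \<Rightarrow> nat poly" where
  "derangement_poly d = (\<Sum>k\<le>d. monom (derangement_num d k) k)"

end

theory Submission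
  imports Defs "HOL-Library.Nat_Bijection"
begin


definition gsc :: "'a set set \<Rightarrow> bool" where
  "gsc K \<longleftrightarrow> finite K \<and> {} \<in> K \<and> (\<forall>F\<in>K. finite F) \<and>
     (\<forall>F\<in>K. \<forall>G. G \<subseteq> F \<longrightarrow> G \<in> K)"

definition gfpoly :: "'a set set \<Rightarrow> nat poly" where
  "gfpoly K = (\<Sum>F\<in>K. monom 1 (card F))"

lemma transfer_sc:
  assumes K: "gsc K" and h: "inj_on h (\<Union>K)"
  shows "simplicial_complex ((\<lambda>F. h ` F) ` K) \<and> f_poly ((\<lambda>F. h ` F) ` K) = gfpoly K"
proof -
  have K1: "finite K" and K2: "{} \<in> K" and K3: "\<And>F. F \<in> K \<Longrightarrow> finite F"
    and K4: "\<And>F G. F \<in> K \<Longrightarrow> G \<subseteq> F \<Longrightarrow> G \<in> K"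
    using K unfolding gsc_def by blast+
  have inj: "inj_on (\<lambda>F. h ` F) K"
    by (rule inj_on_subset[OF inj_on_image_Pow[OF h]]) auto
  have cardeq: "card (h ` F) = card F" if "F \<in> K" for F
    using that by (intro card_image inj_on_subset[OF h]) auto
  have "simplicial_complex ((\<lambda>F. h ` F) ` K)"
    unfolding simplicial_complex_def
  proof (intro conjI ballI allI impI)
    show "finite ((\<lambda>F. h ` F) ` K)" using K1 by simp
    from K2 show "{} \<in> (\<lambda>F. h ` F) ` K" using image_eqI[of "{}" "\<lambda>F. h ` F" "{}"] by simp
  next
    fix F assume "F \<in> (\<lambda>F. h ` F) ` K"
    then obtain F0 where "F0 \<in> K" "F = h ` F0" by (rule imageE)
    then show "finite F" using K3 by simp
  next
    fix F G assume F: "F \<in> (\<lambda>F. h ` F) ` K" and G: "G \<subseteq> F"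
    from F obtain F0 where F0: "F0 \<in> K" "F = h ` F0" by (rule imageE)
    have "G = h ` {x\<in>F0. h x \<in> G}" using G F0(2) by blast
    moreover have "{x\<in>F0. h x \<in> G} \<in> K" by (rule K4[OF F0(1)]) blast
    ultimately show "G \<in> (\<lambda>F. h ` F) ` K" by (rule image_eqI)
  qed
  moreover have "f_poly ((\<lambda>F. h ` F) ` K) = gfpoly K"
    unfolding f_poly_def gfpoly_def
    by (simp add: sum.reindex[OF inj] cardeq)
  ultimately show ?thesis by blast
qed

lemma transfer_nat:
  assumes K: "gsc (K :: nat set set set)" and fin: "\<And>F x. F \<in> K \<Longrightarrow> x \<in> F \<Longrightarrow> finite x"
  shows "\<exists>K'. simplicial_complex K' \<and> f_poly K' = gfpoly K"
proof -
  have "\<Union>K \<subseteq> Collect finite" using fin by blast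
  then show ?thesis using transfer_sc[OF K inj_on_subset[OF inj_on_set_encode]] by blast
qed

lemma monom_card: "monom (card S) k = (\<Sum>x\<in>S. monom 1 k)"
  by (simp only: card_eq_sum monom_sum)

lemma sum_monom_group:
  assumes "finite W" "\<And>w. w \<in> W \<Longrightarrow> f w \<le> m"
  shows "(\<Sum>w\<in>W. monom 1 (f w)) = (\<Sum>k\<le>m. monom (card {w\<in>W. f w = k}) k)"
proof -
  have "(\<Sum>w\<in>W. monom 1 (f w)) = (\<Sum>k\<le>m. \<Sum>w\<in>{w\<in>W. f w = k}. monom 1 (f w))"
    using assms by (intro sum.group[symmetric]) auto
  also have "\<dots> = (\<Sum>k\<le>m. \<Sum>w\<in>{w\<in>W. f w = k}. monom 1 k)"
    by (intro sum.cong refl) simp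
  also have "\<dots> = (\<Sum>k\<le>m. monom (card {w\<in>W. f w = k}) k)"
    by (simp only: monom_card)
  finally show ?thesis .
qed




definition Asc :: "nat \<Rightarrow> (nat \<Rightarrow> nat) \<Rightarrow> nat set" where
  "Asc n w = {i. 1 \<le> i \<and> i < n \<and> w i < w (Suc i)}"

definition pre :: "(nat \<Rightarrow> nat) \<Rightarrow> nat \<Rightarrow> nat set" where
  "pre w i = w ` {1..i}"

definition chainK :: "nat \<Rightarrow> (nat \<Rightarrow> nat) set \<Rightarrow> nat set set set" where
  "chainK n W = {pre w ` I | w I. w \<in> W \<and> I \<subseteq> Asc n w}"

lemma Asc_sub: "Asc n w \<subseteq> {1..<n}"
  unfolding Asc_def by auto

lemma finite_Asc [simp]: "finite (Asc n w)"
  using Asc_sub finite_subset by blast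

lemma card_pre:
  assumes "w permutes {1..n}" shows "card (pre w i) = i"
proof -
  have "inj_on w {1..i}" using permutes_inj[OF assms] by (simp add: inj_on_def inj_def)
  then show ?thesis unfolding pre_def by (simp add: card_image)
qed

lemma pre_n:
  assumes "w permutes {1..n}" shows "pre w n = {1..n}"
  unfolding pre_def using permutes_image[OF assms] .

lemma perm_pos:
  assumes "w permutes {1..n}" "x \<in> {1..n}"
  obtains q where "q \<in> {1..n}" "w q = x"
  using permutes_image[OF assms(1)] assms(2) by (metis imageE)

lemma perm_inj_eq:
  assumes "w permutes S" "w a = w b" shows "a = b"
  using permutes_inj[OF assms(1)] assms(2) by (simp add: inj_def)

lemma perm_in:
  assumes "w permutes S" "x \<in> S" shows "w x \<in> S"
  using permutes_in_image[OF assms(1)] assms(2) by simp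

lemma in_pre:
  assumes "w permutes {1..n}" "w q \<in> pre w i" shows "q \<in> {1..i}"
proof -
  from assms(2) obtain r where "r \<in> {1..i}" "w q = w r" unfolding pre_def by auto
  then show ?thesis using perm_inj_eq[OF assms(1)] by metis
qed

lemma decr:
  fixes w :: "nat \<Rightarrow> nat"
  assumes "\<And>i. j \<le> i \<Longrightarrow> i < p \<Longrightarrow> \<not> w i < w (Suc i)" "j \<le> p"
  shows "w p \<le> w j"
  using assms
proof (induction p)
  case 0 then show ?case by simp
next
  case (Suc p)
  show ?case
  proof (cases "j = Suc p")
    case True then show ?thesis by simp
  next
    case False
    then have "j \<le> p" using Suc.prems by simp
    then have "w p \<le> w j" using Suc.IH Suc.prems by simp
    moreover have "\<not> w p < w (Suc p)" using Suc.prems(1)[of p] \<open>j \<le> p\<close> by simp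
    ultimately show ?thesis by simp
  qed
qed

lemma inj_face_aux:
  assumes s: "\<sigma> permutes {1..n}" and t: "\<tau> permutes {1..n}"
    and I: "Asc n \<sigma> = I" and E: "\<And>i. i \<in> I \<Longrightarrow> pre \<sigma> i = pre \<tau> i"
    and j: "j \<in> {1..n}" and agree: "\<And>q. 1 \<le> q \<Longrightarrow> q < j \<Longrightarrow> \<sigma> q = \<tau> q"
  shows "\<tau> j \<le> \<sigma> j"
proof -
  have "\<tau> j \<in> {1..n}" using perm_in[OF t j] .
  then obtain p where p: "p \<in> {1..n}" "\<sigma> p = \<tau> j" using perm_pos[OF s] by metis
  have pj: "j \<le> p"
  proof (rule ccontr)
    assume "\<not> j \<le> p"
    then have "\<sigma> p = \<tau> p" using agree p(1) by simp
    then have "\<tau> p = \<tau> j" using p by simp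
    then have "p = j" using perm_inj_eq[OF t] by blast
    then show False using \<open>\<not> j \<le> p\<close> by simp
  qed
  have noasc: "\<not> \<sigma> i < \<sigma> (Suc i)" if "j \<le> i" "i < p" for i
  proof
    assume "\<sigma> i < \<sigma> (Suc i)"
    then have "i \<in> I" using I that j p unfolding Asc_def by auto
    then have "pre \<sigma> i = pre \<tau> i" by (rule E)
    moreover have "\<tau> j \<in> pre \<tau> i" unfolding pre_def using that j by auto
    ultimately have "\<sigma> p \<in> pre \<sigma> i" using p by simp
    then have "p \<in> {1..i}" by (rule in_pre[OF s])
    then show False using that by simp
  qed
  have "\<sigma> p \<le> \<sigma> j" by (rule decr[of j p \<sigma>]) (simp_all add: noasc pj)
  then show ?thesis using p by simp
qed

lemma inj_face:
  assumes s: "\<sigma> permutes {1..n}" and t: "\<tau> permutes {1..n}"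
    and eq: "pre \<sigma> ` Asc n \<sigma> = pre \<tau> ` Asc n \<tau>"
  shows "\<sigma> = \<tau>"
proof -
  have A: "i \<in> Asc n \<tau> \<and> pre \<sigma> i = pre \<tau> i"
    if "\<sigma> permutes {1..n}" "\<tau> permutes {1..n}" "pre \<sigma> ` Asc n \<sigma> = pre \<tau> ` Asc n \<tau>"
       "i \<in> Asc n \<sigma>" for \<sigma> \<tau> i
  proof -
    have "pre \<sigma> i \<in> pre \<tau> ` Asc n \<tau>" using that(3,4) by blast
    then obtain k where k: "k \<in> Asc n \<tau>" "pre \<sigma> i = pre \<tau> k" by blast
    have "i = k" using k(2) card_pre[OF that(1), of i] card_pre[OF that(2), of k] by simp
    then show ?thesis using k by simp
  qed
  have AA: "Asc n \<sigma> = Asc n \<tau>"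
  proof (rule set_eqI)
    fix i show "i \<in> Asc n \<sigma> \<longleftrightarrow> i \<in> Asc n \<tau>"
      using A[OF s t eq, of i] A[OF t s eq[symmetric], of i] by auto
  qed
  have E: "\<And>i. i \<in> Asc n \<sigma> \<Longrightarrow> pre \<sigma> i = pre \<tau> i" using A[OF s t eq] by simp
  have E': "\<And>i. i \<in> Asc n \<sigma> \<Longrightarrow> pre \<tau> i = pre \<sigma> i" using E by simp
  have main: "\<And>j. j \<in> {1..n} \<longrightarrow> \<sigma> j = \<tau> j"
  proof -
    fix j show "j \<in> {1..n} \<longrightarrow> \<sigma> j = \<tau> j"
    proof (induction j rule: less_induct)
      case (less j)
      show ?case
      proof
        assume j: "j \<in> {1..n}"
        have ag: "\<And>q. 1 \<le> q \<Longrightarrow> q < j \<Longrightarrow> \<sigma> q = \<tau> q" using less j by simp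
        have ag': "\<And>q. 1 \<le> q \<Longrightarrow> q < j \<Longrightarrow> \<tau> q = \<sigma> q"
        proof -
          fix q assume "1 \<le> q" "q < j" then show "\<tau> q = \<sigma> q" using ag[of q] by simp
        qed
        have "\<tau> j \<le> \<sigma> j" by (rule inj_face_aux[OF s t refl E j ag])
        moreover have "\<sigma> j \<le> \<tau> j"
          by (rule inj_face_aux[OF t s AA[symmetric] E' j ag'])
        ultimately show "\<sigma> j = \<tau> j" by simp
      qed
    qed
  qed
  show ?thesis
  proof
    fix x show "\<sigma> x = \<tau> x"
      using main[of x] permutes_not_in[OF s, of x] permutes_not_in[OF t, of x] by (cases "x \<in> {1..n}") auto
  qed
qed

lemma norm:
  assumes w: "w permutes {1..n}" and I: "I \<subseteq> Asc n w"
  shows "\<exists>\<sigma>. \<sigma> permutes {1..n} \<and> Asc n \<sigma> = I \<and> (\<forall>i\<in>I. pre \<sigma> i = pre w i)"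
proof -
  define S where "S = {\<tau>. \<tau> permutes {1..n} \<and> (\<forall>i\<in>I. pre \<tau> i = pre w i)}"
  define \<mu> where "\<mu> \<tau> = (\<Sum>j\<in>{1..n}. j * \<tau> j)" for \<tau> :: "nat \<Rightarrow> nat"
  have "w \<in> S" unfolding S_def using w by simp
  from ex_has_least_nat[of "\<lambda>\<tau>. \<tau> \<in> S", OF this, of \<mu>]
  obtain \<sigma> where \<sigma>S: "\<sigma> \<in> S" and \<sigma>min: "\<And>\<tau>. \<tau> \<in> S \<Longrightarrow> \<mu> \<sigma> \<le> \<mu> \<tau>" by blast
  have s: "\<sigma> permutes {1..n}" and E: "\<And>i. i \<in> I \<Longrightarrow> pre \<sigma> i = pre w i"
    using \<sigma>S unfolding S_def by auto
  have sub: "Asc n \<sigma> \<subseteq> I"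
  proof
    fix i assume iA: "i \<in> Asc n \<sigma>"
    show "i \<in> I"
    proof (rule ccontr)
      assume iI: "i \<notin> I"
      from iA have i: "1 \<le> i" "i < n" "\<sigma> i < \<sigma> (Suc i)" unfolding Asc_def by auto
      define t where "t = Transposition.transpose i (Suc i)"
      define \<tau> where "\<tau> = \<sigma> \<circ> t"
      have tp: "t permutes {1..n}" unfolding t_def using i by (intro permutes_swap_id) auto
      have \<tau>p: "\<tau> permutes {1..n}" unfolding \<tau>_def by (rule permutes_compose[OF tp s])
      have timg: "t ` {1..k} = {1..k}" if "k \<noteq> i" for k
        unfolding t_def using that i(1) by (intro transpose_image_eq) auto
      have "\<forall>k\<in>I. pre \<tau> k = pre w k"
      proof
        fix k assume k: "k \<in> I"
        then have "k \<noteq> i" using iI by auto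
        then have "pre \<tau> k = pre \<sigma> k" unfolding pre_def \<tau>_def image_comp[symmetric] timg[OF \<open>k \<noteq> i\<close>] by simp
        then show "pre \<tau> k = pre w k" using E[OF k] by simp
      qed
      then have "\<tau> \<in> S" unfolding S_def using \<tau>p by simp
      then have le: "\<mu> \<sigma> \<le> \<mu> \<tau>" by (rule \<sigma>min)
      define R where "R = {1..n} - {i, Suc i}"
      have fR: "finite R" unfolding R_def by simp
      have dec: "{1..n} = insert i (insert (Suc i) R)" unfolding R_def using i by auto
      have split: "(\<Sum>j\<in>{1..n}. f j) = f i + (f (Suc i) + (\<Sum>j\<in>R. f j))" for f :: "nat \<Rightarrow> nat"
        unfolding dec using fR by (simp add: R_def)
      have tR: "\<And>j. j \<in> R \<Longrightarrow> t j = j" unfolding t_def R_def by auto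
      have "\<mu> \<tau> = i * \<sigma> (Suc i) + (Suc i * \<sigma> i + (\<Sum>j\<in>R. j * \<sigma> j))"
        unfolding \<mu>_def split \<tau>_def using tR by (simp add: t_def)
      moreover have "\<mu> \<sigma> = i * \<sigma> i + (Suc i * \<sigma> (Suc i) + (\<Sum>j\<in>R. j * \<sigma> j))"
        unfolding \<mu>_def split by simp
      ultimately have "\<mu> \<tau> + \<sigma> (Suc i) = \<mu> \<sigma> + \<sigma> i" by (simp add: algebra_simps)
      then show False using le i(3) by simp
    qed
  qed
  have sup: "I \<subseteq> Asc n \<sigma>"
  proof
    fix i assume iI: "i \<in> I"
    then have i: "1 \<le> i" "i < n" "w i < w (Suc i)" using I unfolding Asc_def by auto
    have win: "w i \<in> {1..n}" using perm_in[OF w] i by simp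
    then obtain q where q: "q \<in> {1..n}" "\<sigma> q = w i" using perm_pos[OF s] by metis
    have "w i \<in> pre w i" unfolding pre_def using i by simp
    then have "\<sigma> q \<in> pre \<sigma> i" using q E[OF iI] by simp
    then have qi: "q \<in> {1..i}" by (rule in_pre[OF s])
    have na1: "\<not> \<sigma> r < \<sigma> (Suc r)" if "q \<le> r" "r < i" for r
    proof
      assume "\<sigma> r < \<sigma> (Suc r)"
      then have "r \<in> Asc n \<sigma>" unfolding Asc_def using that qi i by auto
      then have rI: "r \<in> I" using sub by blast
      have "\<sigma> q \<in> pre \<sigma> r" unfolding pre_def using that qi by auto
      then have "w i \<in> pre w r" using E[OF rI] q by simp
      then have "i \<in> {1..r}" by (rule in_pre[OF w])
      then show False using that by simp
    qed
    have "\<sigma> i \<le> \<sigma> q" by (rule decr[of q i \<sigma>]) (use na1 qi in auto)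
    then have a: "\<sigma> i \<le> w i" using q(2) by simp
    have win2: "w (Suc i) \<in> {1..n}" using perm_in[OF w] i by simp
    then obtain q' where q': "q' \<in> {1..n}" "\<sigma> q' = w (Suc i)" using perm_pos[OF s] by metis
    have qi2: "Suc i \<le> q'"
    proof (rule ccontr)
      assume "\<not> Suc i \<le> q'"
      then have "q' \<in> {1..i}" using q' by auto
      then have "\<sigma> q' \<in> pre \<sigma> i" unfolding pre_def by (rule imageI)
      then have "w (Suc i) \<in> pre w i" using E[OF iI] q' by simp
      then have "Suc i \<in> {1..i}" by (rule in_pre[OF w])
      then show False by simp
    qed
    have na2: "\<not> \<sigma> r < \<sigma> (Suc r)" if "Suc i \<le> r" "r < q'" for r
    proof
      assume "\<sigma> r < \<sigma> (Suc r)"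
      then have "r \<in> Asc n \<sigma>" unfolding Asc_def using that q' i by auto
      then have rI: "r \<in> I" using sub by blast
      have "w (Suc i) \<in> pre w r" unfolding pre_def using that by auto
      then have "\<sigma> q' \<in> pre \<sigma> r" using E[OF rI] q' by simp
      then have "q' \<in> {1..r}" by (rule in_pre[OF s])
      then show False using that by simp
    qed
    have "\<sigma> q' \<le> \<sigma> (Suc i)" by (rule decr[of "Suc i" q' \<sigma>]) (use na2 qi2 in auto)
    then have b: "w (Suc i) \<le> \<sigma> (Suc i)" using q'(2) by simp
    show "i \<in> Asc n \<sigma>" unfolding Asc_def using a b i by simp
  qed
  show ?thesis using s sub sup E by blast
qed

lemma chain_complex:
  assumes W: "W \<subseteq> {w. w permutes {1..n}}" and ne: "W \<noteq> {}"
    and H: "\<And>w I. w \<in> W \<Longrightarrow> I \<subseteq> Asc n w \<Longrightarrow> \<exists>\<sigma>\<in>W. Asc n \<sigma> = I \<and> (\<forall>i\<in>I. pre \<sigma> i = pre w i)"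
  shows "gsc (chainK n W) \<and> (\<forall>F\<in>chainK n W. \<forall>x\<in>F. finite x)
    \<and> gfpoly (chainK n W) = (\<Sum>w\<in>W. monom 1 (card (Asc n w)))"
proof -
  have img: "chainK n W = (\<lambda>w. pre w ` Asc n w) ` W"
  proof
    show "chainK n W \<subseteq> (\<lambda>w. pre w ` Asc n w) ` W"
    proof
      fix F assume "F \<in> chainK n W"
      then obtain w I where wI: "F = pre w ` I" "w \<in> W" "I \<subseteq> Asc n w" unfolding chainK_def by blast
      from H[OF wI(2,3)] obtain \<sigma> where \<sigma>: "\<sigma> \<in> W" "Asc n \<sigma> = I" "\<forall>i\<in>I. pre \<sigma> i = pre w i" by blast
      have "pre \<sigma> ` Asc n \<sigma> = F" unfolding wI(1) \<sigma>(2) using \<sigma>(3) by (intro image_cong) auto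
      then show "F \<in> (\<lambda>w. pre w ` Asc n w) ` W" using \<sigma>(1) by (rule image_eqI[OF sym])
    qed
  next
    show "(\<lambda>w. pre w ` Asc n w) ` W \<subseteq> chainK n W" unfolding chainK_def by blast
  qed
  have finW: "finite W" by (rule finite_subset[OF W finite_permutations]) simp
  have inj: "inj_on (\<lambda>w. pre w ` Asc n w) W"
  proof
    fix \<sigma> \<tau> assume "\<sigma> \<in> W" "\<tau> \<in> W" "pre \<sigma> ` Asc n \<sigma> = pre \<tau> ` Asc n \<tau>"
    then show "\<sigma> = \<tau>" using subsetD[OF W] by (intro inj_face[of _ n]) auto
  qed
  have cardF: "card (pre w ` Asc n w) = card (Asc n w)" if "w \<in> W" for w
  proof -
    have wp: "w permutes {1..n}" using subsetD[OF W that] by simp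
    have "inj_on (pre w) (Asc n w)"
    proof (rule inj_onI)
      fix i j assume "i \<in> Asc n w" "j \<in> Asc n w" "pre w i = pre w j"
      then have "card (pre w i) = card (pre w j)" by simp
      then show "i = j" by (simp only: card_pre[OF wp])
    qed
    then show ?thesis by (rule card_image)
  qed
  have gfpoly: "gfpoly (chainK n W) = (\<Sum>w\<in>W. monom 1 (card (Asc n w)))"
    unfolding gfpoly_def img by (simp add: sum.reindex[OF inj] cardF)
  have gsc: "gsc (chainK n W)"
    unfolding gsc_def
  proof (intro conjI ballI allI impI)
    show "finite (chainK n W)" unfolding img using finW by simp
    from ne obtain w where "w \<in> W" by blast
    then have "pre w ` {} \<in> chainK n W" unfolding chainK_def by blast
    then show "{} \<in> chainK n W" by simp
  next
    fix F assume "F \<in> chainK n W"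
    then obtain w I where wI: "F = pre w ` I" "w \<in> W" "I \<subseteq> Asc n w" unfolding chainK_def by blast
    have "finite I" using wI(3) by (rule finite_subset) simp
    then show "finite F" using wI(1) by simp
  next
    fix F G assume F: "F \<in> chainK n W" and G: "G \<subseteq> F"
    then obtain w I where wI: "F = pre w ` I" "w \<in> W" "I \<subseteq> Asc n w" unfolding chainK_def by blast
    have "G = pre w ` {i\<in>I. pre w i \<in> G}" using G wI(1) by blast
    moreover have "{i\<in>I. pre w i \<in> G} \<subseteq> Asc n w" using wI(3) by blast
    ultimately show "G \<in> chainK n W" unfolding chainK_def using wI(2) by blast
  qed
  have "\<forall>F\<in>chainK n W. \<forall>x\<in>F. finite x" unfolding chainK_def pre_def by auto
  then show ?thesis using gsc gfpoly by blast
qed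




definition cmp :: "nat \<Rightarrow> nat \<Rightarrow> nat" where
  "cmp n x = (if x \<in> {1..n} then Suc n - x else x)"

lemma cmp_cmp [simp]: "cmp n (cmp n x) = x"
  unfolding cmp_def by auto

lemma cmp_comp [simp]: "cmp n \<circ> (cmp n \<circ> f) = f"
  by (simp add: fun_eq_iff)

lemma cmp_permutes: "cmp n permutes {1..n}"
  unfolding permutes_def
proof (intro conjI allI impI)
  fix x assume "x \<notin> {1..n}" then show "cmp n x = x" unfolding cmp_def by auto
next
  fix y show "\<exists>!x. cmp n x = y"
  proof (rule ex1I[of _ "cmp n y"])
    show "cmp n (cmp n y) = y" by simp
  next
    fix x assume "cmp n x = y" then show "x = cmp n y" using cmp_cmp[of n x] by simp
  qed
qed

lemma cmp_perm_comp:
  assumes "p permutes {1..n}" shows "cmp n \<circ> p permutes {1..n}"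
  using permutes_compose[OF assms cmp_permutes] .

lemma cmp_less:
  assumes "a \<in> {1..n}" "b \<in> {1..n}" shows "cmp n a < cmp n b \<longleftrightarrow> b < a"
  using assms unfolding cmp_def by auto

lemma Asc_cmp:
  assumes p: "\<pi> permutes {1..n}"
  shows "card (Asc n (cmp n \<circ> \<pi>)) = des n \<pi>"
proof -
  have "Asc n (cmp n \<circ> \<pi>) = {i. 1 \<le> i \<and> i < n \<and> \<pi> i > \<pi> (i + 1)}"
  proof (rule set_eqI)
    fix i
    show "i \<in> Asc n (cmp n \<circ> \<pi>) \<longleftrightarrow> i \<in> {i. 1 \<le> i \<and> i < n \<and> \<pi> i > \<pi> (i + 1)}"
    proof (cases "1 \<le> i \<and> i < n")
      case True
      then have "\<pi> i \<in> {1..n}" "\<pi> (Suc i) \<in> {1..n}" using perm_in[OF p] by auto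
      then show ?thesis unfolding Asc_def using True cmp_less by auto
    next
      case False then show ?thesis unfolding Asc_def by auto
    qed
  qed
  then show ?thesis unfolding des_def by simp
qed

lemma eulerian_part:
  assumes "d \<ge> 1"
  shows "\<exists>K. simplicial_complex K \<and> f_poly K = eulerian_poly d"
proof -
  define W where "W = {w. w permutes {1..d}}"
  have ne: "W \<noteq> {}" unfolding W_def using permutes_id by blast
  have H: "\<exists>\<sigma>\<in>W. Asc d \<sigma> = I \<and> (\<forall>i\<in>I. pre \<sigma> i = pre w i)" if "w \<in> W" "I \<subseteq> Asc d w" for w I
    using norm[of w d I] that unfolding W_def by auto
  have cc: "gsc (chainK d W) \<and> (\<forall>F\<in>chainK d W. \<forall>x\<in>F. finite x)
    \<and> gfpoly (chainK d W) = (\<Sum>w\<in>W. monom 1 (card (Asc d w)))"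
    by (rule chain_complex[OF _ ne H]) (simp add: W_def)
  have "(\<Sum>w\<in>W. monom 1 (card (Asc d w))) = (\<Sum>\<pi>\<in>W. monom 1 (card (Asc d (cmp d \<circ> \<pi>))))"
    by (rule sum.reindex_bij_witness[of _ "\<lambda>\<pi>. cmp d \<circ> \<pi>" "\<lambda>\<pi>. cmp d \<circ> \<pi>"])
       (auto simp: W_def intro: cmp_perm_comp[simplified])
  also have "\<dots> = eulerian_poly d"
    unfolding eulerian_poly_def W_def by (intro sum.cong refl) (simp add: Asc_cmp)
  finally have "gfpoly (chainK d W) = eulerian_poly d" using cc by simp
  moreover obtain K' where "simplicial_complex K'" "f_poly K' = gfpoly (chainK d W)"
    using transfer_nat[of "chainK d W"] cc by blast
  ultimately show ?thesis by auto
qed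




definition mk :: "nat \<Rightarrow> (nat \<Rightarrow> nat) \<Rightarrow> nat \<Rightarrow> bool" where
  "mk n w p \<longleftrightarrow> 1 \<le> p \<and> p \<le> n \<and> (\<forall>q. 1 \<le> q \<longrightarrow> q < p \<longrightarrow> w q < w p)"

definition st :: "nat \<Rightarrow> (nat \<Rightarrow> nat) \<Rightarrow> nat \<Rightarrow> nat" where
  "st n w p = Max {q. 1 \<le> q \<and> q \<le> p \<and> mk n w q}"

definition nx :: "nat \<Rightarrow> (nat \<Rightarrow> nat) \<Rightarrow> nat \<Rightarrow> nat" where
  "nx n w p = (if 1 \<le> p \<and> p \<le> n then (if p < n \<and> \<not> mk n w (Suc p) then Suc p else st n w p) else p)"

definition Phi :: "nat \<Rightarrow> (nat \<Rightarrow> nat) \<Rightarrow> nat \<Rightarrow> nat" where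
  "Phi n w = w \<circ> nx n w \<circ> inv w"

definition Pw :: "nat \<Rightarrow> (nat \<Rightarrow> nat) \<Rightarrow> bool" where
  "Pw n w \<longleftrightarrow> (\<forall>p. mk n w p \<longrightarrow> p < n \<and> \<not> mk n w (Suc p))"

lemma mk_1: "1 \<le> n \<Longrightarrow> mk n w 1"
  unfolding mk_def by auto

lemma st_props:
  assumes "1 \<le> p" "p \<le> n"
  shows "mk n w (st n w p) \<and> 1 \<le> st n w p \<and> st n w p \<le> p"
proof -
  let ?S = "{q. 1 \<le> q \<and> q \<le> p \<and> mk n w q}"
  have fin: "finite ?S" by (rule finite_subset[of _ "{..p}"]) auto
  have "1 \<in> ?S" using assms mk_1[of n w] by simp
  then have "?S \<noteq> {}" by blast
  from Max_in[OF fin this] show ?thesis unfolding st_def by simp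
qed

lemma st_ge:
  assumes "1 \<le> q" "q \<le> p" "mk n w q"
  shows "q \<le> st n w p"
proof -
  let ?S = "{q. 1 \<le> q \<and> q \<le> p \<and> mk n w q}"
  have fin: "finite ?S" by (rule finite_subset[of _ "{..p}"]) auto
  have "q \<in> ?S" using assms by simp
  from Max_ge[OF fin this] show ?thesis unfolding st_def .
qed

lemma st_mk: "mk n w p \<Longrightarrow> st n w p = p"
  using st_props[of p n w] st_ge[of p p n w] unfolding mk_def by force

lemma st_Suc:
  assumes "\<not> mk n w (Suc p)"
  shows "st n w (Suc p) = st n w p"
proof -
  have "{q. 1 \<le> q \<and> q \<le> Suc p \<and> mk n w q} = {q. 1 \<le> q \<and> q \<le> p \<and> mk n w q}"
    using assms le_Suc_eq by auto
  then show ?thesis unfolding st_def by simp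
qed

lemma blk:
  fixes w :: "nat \<Rightarrow> nat"
  assumes "1 \<le> p" "p \<le> n"
  shows "\<forall>t. 1 \<le> t \<longrightarrow> t \<le> p \<longrightarrow> w t \<le> w (st n w p)"
  using assms
proof (induction p)
  case 0 then show ?case by simp
next
  case (Suc p)
  show ?case
  proof (cases "mk n w (Suc p)")
    case True
    then have "st n w (Suc p) = Suc p" by (rule st_mk)
    then show ?thesis using True unfolding mk_def by (auto simp: le_Suc_eq)
  next
    case False
    then have p1: "1 \<le> p" using Suc.prems mk_1[of n w] by (cases p) auto
    have st: "st n w (Suc p) = st n w p" by (rule st_Suc[OF False])
    have IH: "\<forall>t. 1 \<le> t \<longrightarrow> t \<le> p \<longrightarrow> w t \<le> w (st n w p)" using Suc.IH p1 Suc.prems by simp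
    from False obtain q where q: "1 \<le> q" "q < Suc p" "\<not> w q < w (Suc p)" using Suc.prems unfolding mk_def by auto
    have "w (Suc p) \<le> w (st n w p)" using IH q by force
    then show ?thesis using IH st by (auto simp: le_Suc_eq)
  qed
qed

lemma nx_range: "p \<in> {1..n} \<Longrightarrow> nx n w p \<in> {1..n}"
  using st_props[of p n w] unfolding nx_def by auto

lemma st_st: "1 \<le> p \<Longrightarrow> p \<le> n \<Longrightarrow> st n w (st n w p) = st n w p"
  using st_props[of p n w] st_mk by blast

lemma st_nx: "p \<in> {1..n} \<Longrightarrow> st n w (nx n w p) = st n w p"
  unfolding nx_def using st_Suc[of n w p] st_st[of p n w] by auto

lemma nx_inj: "inj_on (nx n w) {1..n}"
proof (rule inj_onI)
  fix p q assume p: "p \<in> {1..n}" and q: "q \<in> {1..n}" and eq: "nx n w p = nx n w q"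
  have A: "p = q" if p: "p \<in> {1..n}" and q: "q \<in> {1..n}" and eq: "nx n w p = nx n w q"
    and c: "p < n \<and> \<not> mk n w (Suc p)" and c': "\<not> (q < n \<and> \<not> mk n w (Suc q))" for p q
  proof -
    have "Suc p = st n w q" using eq c c' p q unfolding nx_def by auto
    then have "mk n w (Suc p)" using st_props[of q n w] q by simp
    then show ?thesis using c by simp
  qed
  show "p = q"
  proof (cases "p < n \<and> \<not> mk n w (Suc p)")
    case cp: True
    show ?thesis
    proof (cases "q < n \<and> \<not> mk n w (Suc q)")
      case True then show ?thesis using eq cp p q unfolding nx_def by auto
    next
      case False then show ?thesis using A[OF p q eq cp] by simp
    qed
  next
    case cp: False
    show ?thesis
    proof (cases "q < n \<and> \<not> mk n w (Suc q)")
      case True then show ?thesis using A[OF q p eq[symmetric] True cp] by simp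
    next
      case cq: False
      then have sts: "st n w p = st n w q" using eq cp p q unfolding nx_def by auto
      show ?thesis
      proof (rule ccontr)
        assume "p \<noteq> q"
        then consider "p < q" | "q < p" by linarith
        then show False
        proof cases
          case 1
          then have "Suc p \<le> n" using q by simp
          then have "mk n w (Suc p)" using cp by simp
          then have "Suc p \<le> st n w q" using st_ge[of "Suc p" q n w] 1 by simp
          then show False using sts st_props[of p n w] p by simp
        next
          case 2
          then have "Suc q \<le> n" using p by simp
          then have "mk n w (Suc q)" using cq by simp
          then have "Suc q \<le> st n w p" using st_ge[of "Suc q" p n w] 2 by simp
          then show False using sts st_props[of q n w] q by simp
        qed
      qed
    qed
  qed
qed

lemma nx_perm: "nx n w permutes {1..n}"
proof (rule bij_imp_permutes)
  have "nx n w ` {1..n} \<subseteq> {1..n}" using nx_range by blast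
  then have "nx n w ` {1..n} = {1..n}" using endo_inj_surj[OF _ _ nx_inj] by simp
  then show "bij_betw (nx n w) {1..n} {1..n}" using nx_inj unfolding bij_betw_def by simp
next
  fix x assume "x \<notin> {1..n}" then show "nx n w x = x" unfolding nx_def by auto
qed

lemma Phi_perm: "w permutes {1..n} \<Longrightarrow> Phi n w permutes {1..n}"
  unfolding Phi_def by (intro permutes_compose permutes_inv nx_perm)

lemma Phi_app: "w permutes S \<Longrightarrow> Phi n w (w p) = w (nx n w p)"
  unfolding Phi_def using permutes_inverses(2) by fastforce

lemma reach:
  assumes w: "w permutes {1..n}" and p: "p \<in> {1..n}"
  shows "\<exists>j. (Phi n w ^^ j) (w p) = w (st n w p)"
proof -
  have "p \<le> n" using p by simp
  then have "1 \<le> p \<longrightarrow> (\<exists>j. (Phi n w ^^ j) (w p) = w (st n w p))"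
  proof (induction rule: inc_induct)
    case base
    show ?case
    proof
      assume "1 \<le> n"
      have "Phi n w (w n) = w (st n w n)" using Phi_app[OF w] \<open>1 \<le> n\<close> unfolding nx_def by simp
      then have "(Phi n w ^^ 1) (w n) = w (st n w n)" by simp
      then show "\<exists>j. (Phi n w ^^ j) (w n) = w (st n w n)" by blast
    qed
  next
    case (step m)
    show ?case
    proof
      assume m1: "1 \<le> m"
      show "\<exists>j. (Phi n w ^^ j) (w m) = w (st n w m)"
      proof (cases "mk n w (Suc m)")
        case True
        have "Phi n w (w m) = w (st n w m)" using Phi_app[OF w] m1 step(2) True unfolding nx_def by simp
        then have "(Phi n w ^^ 1) (w m) = w (st n w m)" by simp
        then show ?thesis by blast
      next
        case False
        have ph: "Phi n w (w m) = w (Suc m)" using Phi_app[OF w] m1 step(2) False unfolding nx_def by simp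
        from step(3) obtain j where j: "(Phi n w ^^ j) (w (Suc m)) = w (st n w (Suc m))" by auto
        have "(Phi n w ^^ Suc j) (w m) = (Phi n w ^^ j) (Phi n w (w m))" by (simp only: funpow_Suc_right comp_apply)
        also have "\<dots> = w (st n w m)" using ph j st_Suc[OF False] by simp
        finally show ?thesis by blast
      qed
    qed
  qed
  then show ?thesis using p by simp
qed

lemma key:
  assumes w: "w permutes {1..n}" and w': "w' permutes {1..n}" and eqP: "Phi n w = Phi n w'"
    and p: "p \<in> {1..n}" and mw: "mk n w p" and mw': "mk n w' p"
    and ag: "\<And>q. 1 \<le> q \<Longrightarrow> q < p \<Longrightarrow> w q = w' q"
  shows "w p \<le> w' p"
proof (rule ccontr)
  assume "\<not> w p \<le> w' p"
  then have lt: "w' p < w p" by simp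
  define \<pi> where "\<pi> = Phi n w"
  define B where "B = {w' r | r. r \<in> {1..n} \<and> st n w' r = p}"
  have inv: "\<pi> x \<in> B" if "x \<in> B" for x
  proof -
    from that obtain r where r: "x = w' r" "r \<in> {1..n}" "st n w' r = p" unfolding B_def by blast
    have "\<pi> x = w' (nx n w' r)" unfolding \<pi>_def eqP r(1) by (rule Phi_app[OF w'])
    moreover have "nx n w' r \<in> {1..n}" using nx_range[OF r(2)] .
    moreover have "st n w' (nx n w' r) = p" using st_nx[OF r(2)] r(3) by simp
    ultimately show ?thesis unfolding B_def by blast
  qed
  have iter: "(\<pi> ^^ j) x \<in> B" if "x \<in> B" for x j
    using that by (induction j) (auto intro: inv)
  have bound: "x \<le> w' p" if "x \<in> B" for x
  proof -
    from that obtain r where r: "x = w' r" "r \<in> {1..n}" "st n w' r = p" unfolding B_def by blast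
    then show ?thesis using blk[of r n w'] by auto
  qed
  have "w' p \<in> B" unfolding B_def using p st_mk[OF mw'] by blast
  have "w' p \<in> {1..n}" using perm_in[OF w' p] .
  then obtain q where q: "q \<in> {1..n}" "w q = w' p" using perm_pos[OF w] by metis
  have pq: "p \<le> q"
  proof (rule ccontr)
    assume "\<not> p \<le> q"
    then have "w q = w' q" using ag q(1) by simp
    then have "q = p" using q(2) perm_inj_eq[OF w'] by metis
    then show False using \<open>\<not> p \<le> q\<close> by simp
  qed
  have p1: "1 \<le> p" using p by simp
  have pst: "p \<le> st n w q" using st_ge[OF p1 pq mw] .
  have le2: "w p \<le> w (st n w q)"
  proof (cases "st n w q = p")
    case True then show ?thesis by simp
  next
    case False
    then have "p < st n w q" using pst by simp
    moreover have "mk n w (st n w q)" using st_props[of q n w] q(1) by simp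
    ultimately show ?thesis using p1 unfolding mk_def by auto
  qed
  from reach[OF w q(1)] obtain j where j: "(Phi n w ^^ j) (w q) = w (st n w q)" by blast
  have "w (st n w q) \<in> B" using iter[OF \<open>w' p \<in> B\<close>, of j] j q(2) unfolding \<pi>_def by simp
  then have "w (st n w q) \<le> w' p" by (rule bound)
  then show False using lt le2 by simp
qed

lemma mk_agree:
  assumes "\<And>q. 1 \<le> q \<Longrightarrow> q \<le> m \<Longrightarrow> w q = w' q" "p \<le> m"
  shows "mk n w p \<longleftrightarrow> mk n w' p"
  using assms unfolding mk_def by auto

lemma st_agree:
  assumes "\<And>q. 1 \<le> q \<Longrightarrow> q \<le> m \<Longrightarrow> w q = w' q"
  shows "st n w m = st n w' m"
proof -
  have "{q. 1 \<le> q \<and> q \<le> m \<and> mk n w q} = {q. 1 \<le> q \<and> q \<le> m \<and> mk n w' q}"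
  proof (rule Collect_cong)
    fix q show "(1 \<le> q \<and> q \<le> m \<and> mk n w q) = (1 \<le> q \<and> q \<le> m \<and> mk n w' q)"
      using mk_agree[of m w w' q n] assms by auto
  qed
  then show ?thesis unfolding st_def by simp
qed

lemma Phi_inj:
  assumes w: "w permutes {1..n}" and w': "w' permutes {1..n}" and eqP: "Phi n w = Phi n w'"
  shows "w = w'"
proof -
  have main: "p \<in> {1..n} \<longrightarrow> w p = w' p" for p
  proof (induction p rule: less_induct)
    case (less p)
    show ?case
    proof
      assume p: "p \<in> {1..n}"
      have ag: "\<And>q. 1 \<le> q \<Longrightarrow> q < p \<Longrightarrow> w q = w' q" using less p by simp
      have ag': "\<And>q. 1 \<le> q \<Longrightarrow> q < p \<Longrightarrow> w' q = w q" using ag by simp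
      have both: "w p = w' p" if "mk n w p" "mk n w' p"
        using key[OF w w' eqP p that ag] key[OF w' w eqP[symmetric] p that(2,1) ag'] by simp
      show "w p = w' p"
      proof (cases "p = 1")
        case True
        then have "mk n w p" "mk n w' p" using p unfolding mk_def by auto
        then show ?thesis by (rule both)
      next
        case False
        define m where "m = p - 1"
        have m: "1 \<le> m" "Suc m = p" "m < n" using False p unfolding m_def by auto
        have agm: "\<And>q. 1 \<le> q \<Longrightarrow> q \<le> m \<Longrightarrow> w q = w' q" using ag m by simp
        have stm: "st n w m = st n w' m" by (rule st_agree[OF agm])
        have stp: "mk n w (st n w m) \<and> 1 \<le> st n w m \<and> st n w m \<le> m" using st_props[of m n w] m by simp
        have wm: "w m = w' m" using agm m by simp
        have y: "w (nx n w m) = w' (nx n w' m)"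
          using Phi_app[OF w, of n m] Phi_app[OF w', of n m] eqP wm by simp
        have nxw: "nx n w m = (if mk n w p then st n w m else p)" using m unfolding nx_def by auto
        have nxw': "nx n w' m = (if mk n w' p then st n w' m else p)" using m unfolding nx_def by auto
        have wst: "w (st n w m) = w' (st n w m)" using agm stp by simp
        show ?thesis
        proof (cases "mk n w p")
          case T1: True
          show ?thesis
          proof (cases "mk n w' p")
            case True then show ?thesis using both T1 by simp
          next
            case False
            then have "w (st n w m) = w' p" using y nxw nxw' T1 by simp
            then have "w' (st n w m) = w' p" using wst by simp
            then have "st n w m = p" using perm_inj_eq[OF w'] by metis
            then show ?thesis using stp m by simp
          qed
        next
          case F1: False
          show ?thesis
          proof (cases "mk n w' p")
            case True
            then have "w p = w' (st n w m)" using y nxw nxw' F1 stm by simp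
            then have "w p = w (st n w m)" using wst by simp
            then have "st n w m = p" using perm_inj_eq[OF w] by metis
            then show ?thesis using stp m by simp
          next
            case False then show ?thesis using y nxw nxw' F1 by simp
          qed
        qed
      qed
    qed
  qed
  show ?thesis
  proof
    fix x show "w x = w' x"
      using main[of x] permutes_not_in[OF w, of x] permutes_not_in[OF w', of x] by (cases "x \<in> {1..n}") auto
  qed
qed

lemma nx_fix:
  assumes p: "p \<in> {1..n}"
  shows "nx n w p = p \<longleftrightarrow> mk n w p \<and> (p = n \<or> mk n w (Suc p))"
proof (cases "p < n \<and> \<not> mk n w (Suc p)")
  case True then show ?thesis using p unfolding nx_def by auto
next
  case False
  then have nxe: "nx n w p = st n w p" using p unfolding nx_def by auto
  have "st n w p = p \<longleftrightarrow> mk n w p" using st_props[of p n w] st_mk[of n w p] p by auto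
  then show ?thesis using nxe False p by auto
qed

lemma derange_iff:
  assumes w: "w permutes {1..n}"
  shows "(\<forall>i\<in>{1..n}. Phi n w i \<noteq> i) \<longleftrightarrow> Pw n w"
proof -
  have "(\<forall>i\<in>{1..n}. Phi n w i \<noteq> i) \<longleftrightarrow> (\<forall>p\<in>{1..n}. nx n w p \<noteq> p)"
  proof
    assume A: "\<forall>i\<in>{1..n}. Phi n w i \<noteq> i"
    show "\<forall>p\<in>{1..n}. nx n w p \<noteq> p"
    proof (intro ballI notI)
      fix p assume p: "p \<in> {1..n}" and e: "nx n w p = p"
      have "Phi n w (w p) = w p" using Phi_app[OF w] e by simp
      then show False using A perm_in[OF w p] by blast
    qed
  next
    assume A: "\<forall>p\<in>{1..n}. nx n w p \<noteq> p"
    show "\<forall>i\<in>{1..n}. Phi n w i \<noteq> i"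
    proof (intro ballI notI)
      fix i assume i: "i \<in> {1..n}" and e: "Phi n w i = i"
      obtain p where p: "p \<in> {1..n}" "w p = i" using perm_pos[OF w i] by metis
      have "w (nx n w p) = w p" using Phi_app[OF w, of n p] e p(2) by simp
      then have "nx n w p = p" using perm_inj_eq[OF w] by metis
      then show False using A p(1) by blast
    qed
  qed
  also have "\<dots> \<longleftrightarrow> Pw n w"
  proof
    assume A: "\<forall>p\<in>{1..n}. nx n w p \<noteq> p"
    show "Pw n w" unfolding Pw_def
    proof (intro allI impI)
      fix p assume m: "mk n w p"
      then have p: "p \<in> {1..n}" unfolding mk_def by simp
      have "\<not> (p = n \<or> mk n w (Suc p))" using A p nx_fix[OF p, of w] m by blast
      then show "p < n \<and> \<not> mk n w (Suc p)" using p by auto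
    qed
  next
    assume P: "Pw n w"
    show "\<forall>p\<in>{1..n}. nx n w p \<noteq> p"
    proof (intro ballI notI)
      fix p assume p: "p \<in> {1..n}" and e: "nx n w p = p"
      then have "mk n w p \<and> (p = n \<or> mk n w (Suc p))" using nx_fix[OF p] by simp
      then show False using P unfolding Pw_def by auto
    qed
  qed
  finally show ?thesis .
qed

lemma exc_Phi:
  assumes w: "w permutes {1..n}" and P: "Pw n w" and n: "1 \<le> n"
  shows "exc n (Phi n w) = card (Asc n w) + 1"
proof -
  define X where "X = {p\<in>{1..n}. w p < w (nx n w p)}"
  have "{i\<in>{1..n}. Phi n w i > i} = w ` X"
  proof (rule set_eqI)
    fix i show "i \<in> {i\<in>{1..n}. Phi n w i > i} \<longleftrightarrow> i \<in> w ` X"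
    proof
      assume "i \<in> {i\<in>{1..n}. Phi n w i > i}"
      then have i: "i \<in> {1..n}" "Phi n w i > i" by auto
      obtain p where p: "p \<in> {1..n}" "w p = i" using perm_pos[OF w i(1)] by metis
      have "p \<in> X" unfolding X_def using p i(2) Phi_app[OF w, of n p] by simp
      then show "i \<in> w ` X" using p(2) by blast
    next
      assume "i \<in> w ` X"
      then obtain p where p: "p \<in> X" "i = w p" by blast
      then have "p \<in> {1..n}" "w p < w (nx n w p)" unfolding X_def by auto
      then show "i \<in> {i\<in>{1..n}. Phi n w i > i}" using p(2) perm_in[OF w] Phi_app[OF w, of n p] by simp
    qed
  qed
  then have "exc n (Phi n w) = card (w ` X)" unfolding exc_def by simp
  also have "\<dots> = card X" using permutes_inj[OF w] by (simp add: card_image inj_on_def inj_def)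
  also have "X = insert n (Asc n w)"
  proof (rule set_eqI)
    fix p
    have lt: "w p < w (st n w p)" if "p \<in> {1..n}" "st n w p \<noteq> p" for p
    proof -
      have "w p \<le> w (st n w p)" using blk[of p n w] that by auto
      moreover have "w p \<noteq> w (st n w p)" using perm_inj_eq[OF w] that(2) by metis
      ultimately show ?thesis by simp
    qed
    have stne: "st n w p \<noteq> p" if "p \<in> {1..n}" "p = n \<or> mk n w (Suc p)" for p
    proof
      assume "st n w p = p"
      then have "mk n w p" using st_props[of p n w] that(1) by auto
      then show False using P that(2) unfolding Pw_def by auto
    qed
    show "p \<in> X \<longleftrightarrow> p \<in> insert n (Asc n w)"
    proof (cases "p \<in> {1..n}")
      case False then show ?thesis unfolding X_def Asc_def using n by auto
    next
      case p: True
      show ?thesis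
      proof (cases "p < n \<and> \<not> mk n w (Suc p)")
        case True
        then have "nx n w p = Suc p" using p unfolding nx_def by simp
        then show ?thesis unfolding X_def Asc_def using p True by auto
      next
        case False
        then have nxe: "nx n w p = st n w p" using p unfolding nx_def by auto
        have c: "p = n \<or> mk n w (Suc p)" using False p by auto
        have "p \<in> X" unfolding X_def using nxe lt[OF p stne[OF p c]] p by simp
        moreover have "p \<in> insert n (Asc n w)"
        proof (cases "p = n")
          case True then show ?thesis by simp
        next
          case False
          then have "mk n w (Suc p)" using c by simp
          then have "w p < w (Suc p)" using p unfolding mk_def by auto
          then show ?thesis unfolding Asc_def using p False by auto
        qed
        ultimately show ?thesis by simp
      qed
    qed
  qed
  also have "card (insert n (Asc n w)) = card (Asc n w) + 1"
    using Asc_sub[of n w] by (subst card_insert_disjoint) auto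
  finally show ?thesis .
qed

lemma Phi_surj: "Phi n ` {w. w permutes {1..n}} = {w. w permutes {1..n}}"
proof (rule endo_inj_surj)
  show "finite {w. w permutes {1..n}}" by (rule finite_permutations) simp
  show "Phi n ` {w. w permutes {1..n}} \<subseteq> {w. w permutes {1..n}}" using Phi_perm by blast
  show "inj_on (Phi n) {w. w permutes {1..n}}"
  proof (rule inj_onI)
    fix w w' assume "w \<in> {w. w permutes {1..n}}" "w' \<in> {w. w permutes {1..n}}" "Phi n w = Phi n w'"
    then show "w = w'" using Phi_inj by blast
  qed
qed

lemma der_count:
  assumes n: "1 \<le> n"
  shows "card {\<pi>. \<pi> permutes {1..n} \<and> (\<forall>i\<in>{1..n}. \<pi> i \<noteq> i) \<and> exc n \<pi> = k + 1}
       = card {w. w permutes {1..n} \<and> Pw n w \<and> card (Asc n w) = k}"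
proof -
  define A where "A = {w. w permutes {1..n} \<and> Pw n w \<and> card (Asc n w) = k}"
  have eq: "{\<pi>. \<pi> permutes {1..n} \<and> (\<forall>i\<in>{1..n}. \<pi> i \<noteq> i) \<and> exc n \<pi> = k + 1} = Phi n ` A"
  proof
    show "Phi n ` A \<subseteq> {\<pi>. \<pi> permutes {1..n} \<and> (\<forall>i\<in>{1..n}. \<pi> i \<noteq> i) \<and> exc n \<pi> = k + 1}"
    proof
      fix \<pi> assume "\<pi> \<in> Phi n ` A"
      then obtain w where w: "w permutes {1..n}" "Pw n w" "card (Asc n w) = k" "\<pi> = Phi n w"
        unfolding A_def by blast
      show "\<pi> \<in> {\<pi>. \<pi> permutes {1..n} \<and> (\<forall>i\<in>{1..n}. \<pi> i \<noteq> i) \<and> exc n \<pi> = k + 1}"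
        using Phi_perm[OF w(1)] derange_iff[OF w(1)] exc_Phi[OF w(1,2) n] w by simp
    qed
  next
    show "{\<pi>. \<pi> permutes {1..n} \<and> (\<forall>i\<in>{1..n}. \<pi> i \<noteq> i) \<and> exc n \<pi> = k + 1} \<subseteq> Phi n ` A"
    proof
      fix \<pi> assume pi: "\<pi> \<in> {\<pi>. \<pi> permutes {1..n} \<and> (\<forall>i\<in>{1..n}. \<pi> i \<noteq> i) \<and> exc n \<pi> = k + 1}"
      then have "\<pi> \<in> Phi n ` {w. w permutes {1..n}}" using Phi_surj by simp
      then obtain w where w: "w permutes {1..n}" "\<pi> = Phi n w" by blast
      have P: "Pw n w" using derange_iff[OF w(1)] pi w(2) by simp
      have "card (Asc n w) = k" using exc_Phi[OF w(1) P n] pi w(2) by simp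
      then have "w \<in> A" unfolding A_def using w(1) P by simp
      then show "\<pi> \<in> Phi n ` A" using w(2) by blast
    qed
  qed
  have inj: "inj_on (Phi n) A"
  proof (rule inj_onI)
    fix w w' assume "w \<in> A" "w' \<in> A" "Phi n w = Phi n w'"
    then show "w = w'" unfolding A_def using Phi_inj by blast
  qed
  show ?thesis unfolding eq A_def[symmetric] using inj by (rule card_image)
qed

lemma Ppres:
  assumes w: "w permutes {1..n}" and s: "\<sigma> permutes {1..n}" and P: "Pw n w"
    and I: "I \<subseteq> Asc n w" and As: "Asc n \<sigma> = I" and E: "\<forall>i\<in>I. pre \<sigma> i = pre w i"
  shows "Pw n \<sigma>"
  unfolding Pw_def
proof (intro allI impI)
  fix p assume ms: "mk n \<sigma> p"
  then have p: "1 \<le> p" "p \<le> n" unfolding mk_def by auto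
  show "p < n \<and> \<not> mk n \<sigma> (Suc p)"
  proof (rule ccontr)
    assume c0: "\<not> (p < n \<and> \<not> mk n \<sigma> (Suc p))"
    have c: "p = n \<or> (p < n \<and> mk n \<sigma> (Suc p))" using c0 p by (auto simp: mk_def)
    have preA: "pre \<sigma> (p - 1) = pre w (p - 1)"
    proof (cases "p = 1")
      case True then show ?thesis unfolding pre_def by simp
    next
      case False
      have "p - 1 \<in> I"
      proof (rule ccontr)
        assume "p - 1 \<notin> I"
        then have "\<not> \<sigma> (p - 1) < \<sigma> (Suc (p - 1))" using As False p unfolding Asc_def by auto
        moreover have "\<sigma> (p - 1) < \<sigma> p" using ms False p unfolding mk_def by auto
        ultimately show False using False p by (simp add: Suc_diff_1)
      qed
      then show ?thesis using E by simp
    qed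
    have preB: "pre \<sigma> p = pre w p"
    proof (cases "p = n")
      case True then show ?thesis using pre_n[OF s] pre_n[OF w] by simp
    next
      case False
      then have "mk n \<sigma> (Suc p)" using c by simp
      then have "\<sigma> p < \<sigma> (Suc p)" using p unfolding mk_def by auto
      then have "p \<in> I" using As p False unfolding Asc_def by auto
      then show ?thesis using E by simp
    qed
    have "\<sigma> p \<in> pre w p" using preB p unfolding pre_def by auto
    then obtain r where r: "r \<in> {1..p}" "\<sigma> p = w r" unfolding pre_def by auto
    have rp: "r = p"
    proof (rule ccontr)
      assume "r \<noteq> p"
      then have "r \<in> {1..p-1}" using r(1) by auto
      then have "w r \<in> pre \<sigma> (p - 1)" using preA unfolding pre_def by simp
      then have "\<sigma> p \<in> pre \<sigma> (p - 1)" using r(2) by simp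
      then have "p \<in> {1..p-1}" by (rule in_pre[OF s])
      then show False by auto
    qed
    have sw: "\<sigma> p = w p" using r(2) rp by simp
    have mw: "mk n w p" unfolding mk_def
    proof (intro conjI allI impI)
      show "1 \<le> p" "p \<le> n" using p by auto
    next
      fix q assume q: "1 \<le> q" "q < p"
      then have "w q \<in> pre \<sigma> (p - 1)" using preA unfolding pre_def by auto
      then obtain q' where q': "q' \<in> {1..p-1}" "w q = \<sigma> q'" unfolding pre_def by auto
      then have "\<sigma> q' < \<sigma> p" using ms unfolding mk_def by auto
      then show "w q < w p" using q' sw by simp
    qed
    then have pn: "p < n" and nm: "\<not> mk n w (Suc p)" using P unfolding Pw_def by auto
    then have "mk n \<sigma> (Suc p)" using c by simp
    then have "\<sigma> p < \<sigma> (Suc p)" using p unfolding mk_def by auto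
    then have "p \<in> I" using As p pn unfolding Asc_def by auto
    then have wa: "w p < w (Suc p)" using I unfolding Asc_def by auto
    have "mk n w (Suc p)" unfolding mk_def
    proof (intro conjI allI impI)
      show "1 \<le> Suc p" "Suc p \<le> n" using pn by auto
    next
      fix q assume q: "1 \<le> q" "q < Suc p"
      show "w q < w (Suc p)"
      proof (cases "q = p")
        case True then show ?thesis using wa by simp
      next
        case False
        then have "w q < w p" using mw q unfolding mk_def by auto
        then show ?thesis using wa by simp
      qed
    qed
    then show False using nm by simp
  qed
qed

lemma derangement_part:
  assumes d: "d \<ge> 1"
  shows "\<exists>K. simplicial_complex K \<and> f_poly K = derangement_poly d"
proof -
  define n where "n = d + 1"
  have n2: "2 \<le> n" using d unfolding n_def by simp
  define W where "W = {w. w permutes {1..n} \<and> Pw n w}"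
  define w0 where "w0 = Transposition.transpose 1 n"
  have w0p: "w0 permutes {1..n}" unfolding w0_def using n2 by (intro permutes_swap_id) auto
  have w01: "w0 1 = n" unfolding w0_def by simp
  have mk0: "p = 1" if "mk n w0 p" for p
  proof (rule ccontr)
    assume "p \<noteq> 1"
    then have "1 < p" "p \<le> n" using that unfolding mk_def by auto
    then have "w0 1 < w0 p" using that unfolding mk_def by auto
    moreover have "w0 p \<le> n" using perm_in[OF w0p, of p] \<open>1 < p\<close> \<open>p \<le> n\<close> by simp
    ultimately show False using w01 by simp
  qed
  have "Pw n w0" unfolding Pw_def
  proof (intro allI impI)
    fix p assume "mk n w0 p"
    then have "p = 1" by (rule mk0)
    then show "p < n \<and> \<not> mk n w0 (Suc p)" using n2 mk0[of "Suc p"] by auto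
  qed
  then have ne: "W \<noteq> {}" unfolding W_def using w0p by blast
  have H: "\<exists>\<sigma>\<in>W. Asc n \<sigma> = I \<and> (\<forall>i\<in>I. pre \<sigma> i = pre w i)" if wW: "w \<in> W" and IA: "I \<subseteq> Asc n w" for w I
  proof -
    have w: "w permutes {1..n}" "Pw n w" using wW unfolding W_def by auto
    obtain \<sigma> where \<sigma>: "\<sigma> permutes {1..n}" "Asc n \<sigma> = I" "\<forall>i\<in>I. pre \<sigma> i = pre w i"
      using norm[OF w(1) IA] by blast
    have "Pw n \<sigma>" by (rule Ppres[OF w(1) \<sigma>(1) w(2) IA \<sigma>(2,3)])
    then show ?thesis using \<sigma> unfolding W_def by blast
  qed
  have cc: "gsc (chainK n W) \<and> (\<forall>F\<in>chainK n W. \<forall>x\<in>F. finite x)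
    \<and> gfpoly (chainK n W) = (\<Sum>w\<in>W. monom 1 (card (Asc n w)))"
    by (rule chain_complex[OF _ ne H]) (auto simp: W_def)
  have finW: "finite W" unfolding W_def by (rule finite_subset[OF _ finite_permutations[of "{1..n}"]]) auto
  have bnd: "card (Asc n w) \<le> d" for w
  proof -
    have "card (Asc n w) \<le> card {1..<n}" by (rule card_mono[OF _ Asc_sub]) simp
    then show ?thesis unfolding n_def by simp
  qed
  have "(\<Sum>w\<in>W. monom 1 (card (Asc n w))) = (\<Sum>k\<le>d. monom (card {w\<in>W. card (Asc n w) = k}) k)"
    by (rule sum_monom_group[OF finW bnd])
  also have "\<dots> = derangement_poly d"
    unfolding derangement_poly_def
  proof (intro sum.cong refl arg_cong2[where f = monom])
    fix k
    have "card {w\<in>W. card (Asc n w) = k} = card {w. w permutes {1..n} \<and> Pw n w \<and> card (Asc n w) = k}"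
      unfolding W_def by (rule arg_cong[where f = card]) auto
    also have "\<dots> = card {\<pi>. \<pi> permutes {1..n} \<and> (\<forall>i\<in>{1..n}. \<pi> i \<noteq> i) \<and> exc n \<pi> = k + 1}"
      using der_count[of n k] n2 by simp
    also have "\<dots> = derangement_num d k" unfolding derangement_num_def n_def by simp
    finally show "card {w\<in>W. card (Asc n w) = k} = derangement_num d k" .
  qed
  finally have "gfpoly (chainK n W) = derangement_poly d" using cc by simp
  moreover obtain K' where "simplicial_complex K'" "f_poly K' = gfpoly (chainK n W)"
    using transfer_nat[of "chainK n W"] cc by blast
  ultimately show ?thesis by auto
qed




definition Fam :: "nat \<Rightarrow> nat set set set" where
  "Fam n = {Q. (\<forall>B\<in>Q. B \<noteq> {} \<and> B \<subseteq> {2..n}) \<and> (\<forall>B\<in>Q. \<forall>B'\<in>Q. B \<noteq> B' \<longrightarrow> B \<inter> B' = {})}"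

definition cnt :: "nat \<Rightarrow> nat \<Rightarrow> nat" where
  "cnt n k = card {Q \<in> Fam n. card Q = k}"

lemma FamI:
  assumes "\<And>B. B \<in> Q \<Longrightarrow> B \<noteq> {}" "\<And>B. B \<in> Q \<Longrightarrow> B \<subseteq> {2..n}"
    "\<And>B B'. B \<in> Q \<Longrightarrow> B' \<in> Q \<Longrightarrow> B \<noteq> B' \<Longrightarrow> B \<inter> B' = {}"
  shows "Q \<in> Fam n"
  unfolding Fam_def using assms by simp

lemma FamD:
  assumes "Q \<in> Fam n"
  shows "\<And>B. B \<in> Q \<Longrightarrow> B \<noteq> {}" "\<And>B. B \<in> Q \<Longrightarrow> B \<subseteq> {2..n}"
    "\<And>B B'. B \<in> Q \<Longrightarrow> B' \<in> Q \<Longrightarrow> B \<noteq> B' \<Longrightarrow> B \<inter> B' = {}"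
  using assms unfolding Fam_def by simp_all

lemma Fam_sub: "Fam n \<subseteq> Pow (Pow {2..n})"
proof
  fix Q assume "Q \<in> Fam n"
  then have "\<And>B. B \<in> Q \<Longrightarrow> B \<subseteq> {2..n}" by (rule FamD)
  then show "Q \<in> Pow (Pow {2..n})" by blast
qed

lemma finite_Fam: "finite (Fam n)"
  by (rule finite_subset[OF Fam_sub]) simp

lemma Fam_finite_mem: "Q \<in> Fam n \<Longrightarrow> finite Q"
  using Fam_sub[of n] by (rule_tac finite_subset[of Q "Pow {2..n}"]) auto

lemma Fam_1: "Fam 1 = {{}}"
proof
  show "Fam 1 \<subseteq> {{}}"
  proof
    fix Q assume Q: "Q \<in> Fam 1"
    have "Q = {}"
    proof (rule ccontr)
      assume "Q \<noteq> {}"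
      then obtain B where B: "B \<in> Q" by blast
      have "B \<noteq> {}" "B \<subseteq> {2..1}" using FamD[OF Q] B by auto
      then show False by auto
    qed
    then show "Q \<in> {{}}" by simp
  qed
next
  show "{{}} \<subseteq> Fam 1" by (auto intro: FamI)
qed

lemma cnt_1: "cnt 1 k = (if k = 0 then 1 else 0)"
proof -
  have "{Q \<in> Fam 1. card Q = k} = (if k = 0 then {{}} else {})" unfolding Fam_1 by auto
  then show ?thesis unfolding cnt_def by simp
qed

lemma Fam_mono: "Q \<in> Fam n \<Longrightarrow> Q \<in> Fam (Suc n)"
proof (rule FamI)
  fix B assume "Q \<in> Fam n" "B \<in> Q"
  then have "B \<subseteq> {2..n}" by (rule FamD)
  then show "B \<subseteq> {2..Suc n}" by auto
qed (auto dest: FamD)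

lemma rec_cnt:
  assumes n: "1 \<le> n"
  shows "cnt (Suc n) k = cnt n k + (if k = 0 then 0 else cnt n (k - 1)) + k * cnt n k"
proof -
  define m where "m = Suc n"
  define S where "S = (\<lambda>j. {Q \<in> Fam n. card Q = j})"
  define A where "A = {Q \<in> Fam m. card Q = k \<and> (\<forall>B\<in>Q. m \<notin> B)}"
  define Bs where "Bs = {Q \<in> Fam m. card Q = k \<and> {m} \<in> Q}"
  define C where "C = {Q \<in> Fam m. card Q = k \<and> (\<exists>B\<in>Q. m \<in> B) \<and> {m} \<notin> Q}"
  have m2: "2 \<le> m" using n unfolding m_def by simp
  have blk_sub: "B \<subseteq> {2..n}" if "B \<subseteq> {2..m}" "m \<notin> B" for B
  proof
    fix x assume "x \<in> B" then show "x \<in> {2..n}" using that unfolding m_def by (cases "x = Suc n") auto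
  qed
  have notin: "m \<notin> B" if "Q \<in> Fam n" "B \<in> Q" for Q B
  proof -
    have "B \<subseteq> {2..n}" using FamD(2)[OF that] .
    then show ?thesis unfolding m_def by auto
  qed
  have finFm: "finite (Fam m)" by (rule finite_Fam)
  have un: "{Q \<in> Fam m. card Q = k} = A \<union> Bs \<union> C"
  proof (rule set_eqI)
    fix Q
    show "Q \<in> {Q \<in> Fam m. card Q = k} \<longleftrightarrow> Q \<in> A \<union> Bs \<union> C"
      unfolding A_def Bs_def C_def mem_Collect_eq Un_iff by (cases "\<forall>B\<in>Q. m \<notin> B"; cases "{m} \<in> Q") auto
  qed
  have d1: "A \<inter> Bs = {}" unfolding A_def Bs_def by auto
  have d2: "(A \<union> Bs) \<inter> C = {}" unfolding A_def Bs_def C_def by auto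
  have fA: "finite A" "finite Bs" "finite C" unfolding A_def Bs_def C_def using finFm by auto
  have cardU: "card {Q \<in> Fam m. card Q = k} = card A + card Bs + card C"
    unfolding un using d1 d2 fA by (simp add: card_Un_disjoint[of "A \<union> Bs" C] card_Un_disjoint[of A Bs])
  have "A = S k"
  proof
    show "A \<subseteq> S k"
    proof
      fix Q assume "Q \<in> A"
      then have Q: "Q \<in> Fam m" "card Q = k" "\<forall>B\<in>Q. m \<notin> B" unfolding A_def by auto
      have "Q \<in> Fam n"
      proof (rule FamI)
        fix B assume "B \<in> Q" then show "B \<noteq> {}" using FamD(1)[OF Q(1)] by blast
      next
        fix B assume B: "B \<in> Q" then show "B \<subseteq> {2..n}" using FamD(2)[OF Q(1) B] Q(3) blk_sub by blast
      next
        fix B B' assume "B \<in> Q" "B' \<in> Q" "B \<noteq> B'" then show "B \<inter> B' = {}" using FamD(3)[OF Q(1)] by blast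
      qed
      then show "Q \<in> S k" using Q unfolding S_def by simp
    qed
  next
    show "S k \<subseteq> A"
    proof
      fix Q assume "Q \<in> S k"
      then have Q: "Q \<in> Fam n" "card Q = k" unfolding S_def by auto
      have "Q \<in> Fam m" unfolding m_def by (rule Fam_mono[OF Q(1)])
      then show "Q \<in> A" unfolding A_def using Q(2) notin[OF Q(1)] by blast
    qed
  qed
  then have cA: "card A = cnt n k" unfolding S_def cnt_def by simp
  have cB: "card Bs = (if k = 0 then 0 else cnt n (k - 1))"
  proof (cases "k = 0")
    case True
    have "Bs = {}"
    proof (rule ccontr)
      assume "Bs \<noteq> {}"
      then obtain Q where Q: "Q \<in> Fam m" "card Q = 0" "{m} \<in> Q" unfolding Bs_def True by auto
      have "finite Q" using Fam_finite_mem[OF Q(1)] .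
      then show False using Q(2,3) by simp
    qed
    then show ?thesis using True by simp
  next
    case False
    have eq: "Bs = insert {m} ` S (k - 1)"
    proof
      show "Bs \<subseteq> insert {m} ` S (k - 1)"
      proof
        fix Q assume "Q \<in> Bs"
        then have Q: "Q \<in> Fam m" "card Q = k" "{m} \<in> Q" unfolding Bs_def by auto
        have fQ: "finite Q" using Fam_finite_mem[OF Q(1)] .
        have "Q - {{m}} \<in> Fam n"
        proof (rule FamI)
          fix B assume B: "B \<in> Q - {{m}}"
          then show "B \<noteq> {}" using FamD(1)[OF Q(1)] by blast
          have "B \<inter> {m} = {}" using FamD(3)[OF Q(1), of B "{m}"] B Q(3) by blast
          then have "m \<notin> B" by auto
          moreover have "B \<subseteq> {2..m}" using B FamD(2)[OF Q(1)] by blast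
          ultimately show "B \<subseteq> {2..n}" using blk_sub by blast
        next
          fix B B' assume "B \<in> Q - {{m}}" "B' \<in> Q - {{m}}" "B \<noteq> B'"
          then show "B \<inter> B' = {}" using FamD(3)[OF Q(1)] by blast
        qed
        moreover have "card (Q - {{m}}) = k - 1" using Q(2,3) fQ by simp
        ultimately have "Q - {{m}} \<in> S (k - 1)" unfolding S_def by simp
        moreover have "Q = insert {m} (Q - {{m}})" using Q(3) by auto
        ultimately show "Q \<in> insert {m} ` S (k - 1)" by blast
      qed
    next
      show "insert {m} ` S (k - 1) \<subseteq> Bs"
      proof
        fix Q assume "Q \<in> insert {m} ` S (k - 1)"
        then obtain Q' where Q': "Q' \<in> Fam n" "card Q' = k - 1" "Q = insert {m} Q'" unfolding S_def by auto
        have mQ': "{m} \<notin> Q'" using notin[OF Q'(1)] by auto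
        have "Q \<in> Fam m"
        proof (rule FamI)
          fix B assume B: "B \<in> Q"
          show "B \<noteq> {}" using B Q'(3) FamD(1)[OF Q'(1)] by auto
          show "B \<subseteq> {2..m}"
          proof (cases "B = {m}")
            case True then show ?thesis using m2 by simp
          next
            case False
            then have "B \<in> Q'" using B Q'(3) by simp
            then have "B \<subseteq> {2..n}" by (rule FamD(2)[OF Q'(1)])
            then show ?thesis unfolding m_def by auto
          qed
        next
          fix B B' assume B: "B \<in> Q" "B' \<in> Q" "B \<noteq> B'"
          show "B \<inter> B' = {}"
          proof (cases "B = {m}")
            case True
            then have "B' \<in> Q'" using B Q'(3) by auto
            then show ?thesis using True notin[OF Q'(1)] by auto
          next
            case F1: False
            show ?thesis
            proof (cases "B' = {m}")
              case True
              then have "B \<in> Q'" using B Q'(3) F1 by auto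
              then show ?thesis using True notin[OF Q'(1)] by auto
            next
              case False
              then have "B \<in> Q'" "B' \<in> Q'" using B Q'(3) F1 by auto
              then show ?thesis using FamD(3)[OF Q'(1)] B(3) by blast
            qed
          qed
        qed
        moreover have "card Q = k" using Q'(2,3) mQ' Fam_finite_mem[OF Q'(1)] False by simp
        ultimately show "Q \<in> Bs" unfolding Bs_def using Q'(3) by simp
      qed
    qed
    have inj: "inj_on (insert {m}) (S (k - 1))"
    proof (rule inj_onI)
      fix Q1 Q2 assume Q: "Q1 \<in> S (k - 1)" "Q2 \<in> S (k - 1)" "insert {m} Q1 = insert {m} Q2"
      have "{m} \<notin> Q1" "{m} \<notin> Q2" using Q(1,2) notin unfolding S_def by auto
      then show "Q1 = Q2" using Q(3) by (metis insert_ident)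
    qed
    have "card Bs = card (S (k - 1))" unfolding eq using inj by (rule card_image)
    then show ?thesis using False unfolding S_def cnt_def by simp
  qed
  define h where "h = (\<lambda>QB::nat set set \<times> nat set. insert (insert m (snd QB)) (fst QB - {snd QB}))"
  define Sg where "Sg = Sigma (S k) (\<lambda>Q. Q)"
  have cSg: "card Sg = k * cnt n k"
  proof -
    have fS: "finite (S k)" unfolding S_def using finite_Fam by simp
    have "card Sg = (\<Sum>Q\<in>S k. card Q)" unfolding Sg_def
      using fS by (intro card_SigmaI) (auto simp: S_def Fam_finite_mem)
    also have "\<dots> = (\<Sum>Q\<in>S k. k)" by (intro sum.cong refl) (simp add: S_def)
    also have "\<dots> = k * cnt n k" unfolding cnt_def S_def by simp
    finally show ?thesis .
  qed
  have hC: "h ` Sg = C"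
  proof
    show "h ` Sg \<subseteq> C"
    proof
      fix R assume "R \<in> h ` Sg"
      then obtain Q B where QB: "Q \<in> Fam n" "card Q = k" "B \<in> Q" "R = insert (insert m B) (Q - {B})"
        unfolding Sg_def S_def h_def by auto
      have mB: "m \<notin> B" using notin[OF QB(1,3)] .
      have Bne: "B \<noteq> {}" using FamD(1)[OF QB(1,3)] .
      have Bsub: "B \<subseteq> {2..n}" using FamD(2)[OF QB(1,3)] .
      have mn: "insert m B \<notin> Q - {B}" using notin[OF QB(1)] by blast
      have "R \<in> Fam m"
      proof (rule FamI)
        fix X assume X: "X \<in> R"
        show "X \<noteq> {}" using X QB(4) FamD(1)[OF QB(1)] by auto
        show "X \<subseteq> {2..m}"
        proof (cases "X = insert m B")
          case True then show ?thesis using Bsub m2 unfolding m_def by auto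
        next
          case False
          then have "X \<in> Q" using X QB(4) by auto
          then have "X \<subseteq> {2..n}" by (rule FamD(2)[OF QB(1)])
          then show ?thesis unfolding m_def by auto
        qed
      next
        fix X Y assume XY: "X \<in> R" "Y \<in> R" "X \<noteq> Y"
        show "X \<inter> Y = {}"
        proof (cases "X = insert m B")
          case True
          then have Y: "Y \<in> Q" "Y \<noteq> B" using XY QB(4) by auto
          have "B \<inter> Y = {}" using FamD(3)[OF QB(1) QB(3) Y(1)] Y(2) by auto
          moreover have "m \<notin> Y" using notin[OF QB(1) Y(1)] .
          ultimately show ?thesis using True by auto
        next
          case F1: False
          then have X: "X \<in> Q" "X \<noteq> B" using XY QB(4) by auto
          show ?thesis
          proof (cases "Y = insert m B")
            case True
            have "X \<inter> B = {}" using FamD(3)[OF QB(1) X(1) QB(3)] X(2) by auto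
            moreover have "m \<notin> X" using notin[OF QB(1) X(1)] .
            ultimately show ?thesis using True by auto
          next
            case False
            then have "Y \<in> Q" using XY QB(4) by auto
            then show ?thesis using FamD(3)[OF QB(1) X(1)] XY(3) by blast
          qed
        qed
      qed
      moreover have "card R = k"
      proof -
        have fQ: "finite Q" using Fam_finite_mem[OF QB(1)] .
        have "card R = Suc (card (Q - {B}))" unfolding QB(4) using fQ mn by simp
        also have "\<dots> = k" using QB(2) card_Suc_Diff1[OF fQ QB(3)] by simp
        finally show ?thesis .
      qed
      moreover have "\<exists>X\<in>R. m \<in> X" using QB(4) by auto
      moreover have "{m} \<notin> R"
      proof
        assume "{m} \<in> R"
        then consider "{m} = insert m B" | "{m} \<in> Q" using QB(4) by auto
        then show False
        proof cases
          case 1 then show False using mB Bne by auto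
        next
          case 2 then show False using notin[OF QB(1)] by auto
        qed
      qed
      ultimately show "R \<in> C" unfolding C_def by simp
    qed
  next
    show "C \<subseteq> h ` Sg"
    proof
      fix R assume "R \<in> C"
      then have R: "R \<in> Fam m" "card R = k" "{m} \<notin> R" and "\<exists>X\<in>R. m \<in> X" unfolding C_def by auto
      then obtain B0 where B0: "B0 \<in> R" "m \<in> B0" by blast
      define B where "B = B0 - {m}"
      define Q where "Q = insert B (R - {B0})"
      have B0ne: "B0 \<noteq> {m}" using R(3) B0(1) by auto
      have Bne: "B \<noteq> {}" unfolding B_def using B0ne B0(2) by auto
      have mB: "m \<notin> B" unfolding B_def by simp
      have other: "m \<notin> X \<and> X \<inter> B0 = {}" if "X \<in> R" "X \<noteq> B0" for X
        using FamD(3)[OF R(1) that(1) B0(1) that(2)] B0(2) by auto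
      have BnR: "B \<notin> R - {B0}"
      proof
        assume "B \<in> R - {B0}"
        then have "B \<inter> B0 = {}" using other by auto
        then show False using Bne unfolding B_def by auto
      qed
      have "Q \<in> Fam n"
      proof (rule FamI)
        fix X assume X: "X \<in> Q"
        show "X \<noteq> {}" using X Bne FamD(1)[OF R(1)] unfolding Q_def by auto
        show "X \<subseteq> {2..n}"
        proof (cases "X = B")
          case True
          have "B0 \<subseteq> {2..m}" using FamD(2)[OF R(1) B0(1)] .
          then show ?thesis using True mB blk_sub unfolding B_def by blast
        next
          case False
          then have X': "X \<in> R" "X \<noteq> B0" using X unfolding Q_def by auto
          then show ?thesis using FamD(2)[OF R(1) X'(1)] other[OF X'] blk_sub by blast
        qed
      next
        fix X Y assume XY: "X \<in> Q" "Y \<in> Q" "X \<noteq> Y"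
        show "X \<inter> Y = {}"
        proof (cases "X = B")
          case True
          then have "Y \<in> R" "Y \<noteq> B0" using XY unfolding Q_def by auto
          then show ?thesis using other True unfolding B_def by auto
        next
          case F1: False
          then have X: "X \<in> R" "X \<noteq> B0" using XY unfolding Q_def by auto
          show ?thesis
          proof (cases "Y = B")
            case True
            then show ?thesis using other[OF X] unfolding B_def by auto
          next
            case False
            then have "Y \<in> R" using XY unfolding Q_def by auto
            then show ?thesis using FamD(3)[OF R(1) X(1)] XY(3) by blast
          qed
        qed
      qed
      moreover have "card Q = k"
      proof -
        have fR: "finite R" using Fam_finite_mem[OF R(1)] .
        have "card Q = Suc (card (R - {B0}))" unfolding Q_def using fR BnR by simp
        also have "\<dots> = k" using R(2) card_Suc_Diff1[OF fR B0(1)] by simp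
        finally show ?thesis .
      qed
      moreover have "B \<in> Q" unfolding Q_def by simp
      ultimately have inS: "(Q, B) \<in> Sg" unfolding Sg_def S_def by simp
      have "h (Q, B) = insert (insert m B) (Q - {B})" unfolding h_def by simp
      also have "insert m B = B0" unfolding B_def using B0(2) by auto
      also have "Q - {B} = R - {B0}" unfolding Q_def using BnR by auto
      also have "insert B0 (R - {B0}) = R" using B0(1) by auto
      finally show "R \<in> h ` Sg" using inS by (metis image_eqI)
    qed
  qed
  have hinj: "inj_on h Sg"
  proof (rule inj_onI)
    fix x y assume x: "x \<in> Sg" and y: "y \<in> Sg" and e: "h x = h y"
    obtain Q1 B1 where 1: "x = (Q1, B1)" "Q1 \<in> Fam n" "B1 \<in> Q1" using x unfolding Sg_def S_def by auto
    obtain Q2 B2 where 2: "y = (Q2, B2)" "Q2 \<in> Fam n" "B2 \<in> Q2" using y unfolding Sg_def S_def by auto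
    have e': "insert (insert m B1) (Q1 - {B1}) = insert (insert m B2) (Q2 - {B2})"
      using e 1(1) 2(1) unfolding h_def by simp
    have n2: "insert m B1 \<notin> Q2 - {B2}" using notin[OF 2(2)] by blast
    have n1: "insert m B1 \<notin> Q1 - {B1}" using notin[OF 1(2)] by blast
    have n2': "insert m B2 \<notin> Q2 - {B2}" using notin[OF 2(2)] by blast
    have "insert m B1 \<in> insert (insert m B2) (Q2 - {B2})" using e' by blast
    then have ib: "insert m B1 = insert m B2" using n2 by blast
    have "B1 = insert m B1 - {m}" using notin[OF 1(2,3)] by auto
    also have "\<dots> = insert m B2 - {m}" using ib by simp
    also have "\<dots> = B2" using notin[OF 2(2,3)] by auto
    finally have bb: "B1 = B2" .
    have "Q1 - {B1} = insert (insert m B1) (Q1 - {B1}) - {insert m B1}" using n1 by auto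
    also have "\<dots> = insert (insert m B2) (Q2 - {B2}) - {insert m B2}" using e' ib by simp
    also have "\<dots> = Q2 - {B2}" using n2' by auto
    finally have "Q1 - {B1} = Q2 - {B2}" .
    then have "Q1 = Q2" using 1(3) 2(3) bb by (metis insert_Diff)
    then show "x = y" using 1(1) 2(1) bb by simp
  qed
  have cC: "card C = k * cnt n k" using card_image[OF hinj] hC cSg by simp
  show ?thesis using cardU cA cB cC unfolding cnt_def m_def by simp
qed

lemma cnt_Stirling:
  assumes "1 \<le> n" shows "cnt n k = Stirling n (Suc k)"
  using assms
proof (induction n arbitrary: k rule: nat_induct_at_least)
  case base
  show ?case using cnt_1[of k] by (cases k) simp_all
next
  case (Suc n)
  obtain n' where n': "n = Suc n'" using Suc.hyps by (cases n) auto
  have "cnt (Suc n) k = cnt n k + (if k = 0 then 0 else cnt n (k - 1)) + k * cnt n k"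
    by (rule rec_cnt[OF Suc.hyps])
  also have "\<dots> = Stirling (Suc n) (Suc k)"
  proof (cases k)
    case 0 then show ?thesis using Suc.IH n' by simp
  next
    case (Suc k') then show ?thesis using Suc.IH[of k] Suc.IH[of k'] by simp
  qed
  finally show ?case .
qed

lemma stirling_part:
  assumes d: "d \<ge> 1"
  shows "\<exists>K. simplicial_complex K \<and> f_poly K = stirling2_poly d"
proof -
  have gsc: "gsc (Fam d)"
    unfolding gsc_def
  proof (intro conjI ballI allI impI)
    show "finite (Fam d)" by (rule finite_Fam)
    show "{} \<in> Fam d" by (rule FamI) auto
  next
    fix Q assume "Q \<in> Fam d" then show "finite Q" by (rule Fam_finite_mem)
  next
    fix Q G assume Q: "Q \<in> Fam d" and G: "G \<subseteq> Q"
    show "G \<in> Fam d"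
    proof (rule FamI)
      fix B assume "B \<in> G" then have "B \<in> Q" using G by blast
      then show "B \<noteq> {}" "B \<subseteq> {2..d}" using FamD(1,2)[OF Q] by auto
    next
      fix B B' assume "B \<in> G" "B' \<in> G" "B \<noteq> B'"
      then show "B \<inter> B' = {}" using FamD(3)[OF Q] G by blast
    qed
  qed
  have fin: "finite x" if "F \<in> Fam d" "x \<in> F" for F x
    using FamD(2)[OF that] finite_subset by blast
  have bnd: "card Q \<le> 2 ^ d" if "Q \<in> Fam d" for Q
  proof -
    have "card Q \<le> card (Pow {2..d})" using Fam_sub[of d] that by (intro card_mono) auto
    also have "\<dots> = 2 ^ (d - 1)" by (simp add: card_Pow)
    also have "\<dots> \<le> 2 ^ d" by (rule power_increasing) auto
    finally show ?thesis .
  qed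
  have "gfpoly (Fam d) = (\<Sum>k\<le>2 ^ d. monom (card {Q \<in> Fam d. card Q = k}) k)"
    unfolding gfpoly_def by (rule sum_monom_group[OF finite_Fam bnd])
  also have "\<dots> = (\<Sum>k\<le>2 ^ d. monom (Stirling d (Suc k)) k)"
    using cnt_Stirling[OF d] unfolding cnt_def by simp
  also have "\<dots> = (\<Sum>k<d. monom (Stirling d (Suc k)) k)"
  proof (rule sum.mono_neutral_right)
    show "finite {..(2::nat) ^ d}" by simp
    have "d < (2::nat) ^ d" by (rule less_exp)
    then show "{..<d} \<subseteq> {..(2::nat) ^ d}"
    proof -
      assume dl: "d < (2::nat) ^ d"
      show ?thesis
      proof
        fix x assume "x \<in> {..<d}"
        then have "x < d" by simp
        then have "x < (2::nat) ^ d" using dl by (rule less_trans)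
        then show "x \<in> {..(2::nat) ^ d}" by simp
      qed
    qed
    show "\<forall>i\<in>{..(2::nat) ^ d} - {..<d}. monom (Stirling d (Suc i)) i = 0" by auto
  qed
  also have "\<dots> = stirling2_poly d" unfolding stirling2_poly_def by simp
  finally have "gfpoly (Fam d) = stirling2_poly d" .
  moreover have "\<exists>K'. simplicial_complex K' \<and> f_poly K' = gfpoly (Fam d)"
    by (rule transfer_nat[OF gsc]) (erule (1) fin)
  then obtain K' where "simplicial_complex K'" "f_poly K' = gfpoly (Fam d)" by blast
  ultimately show ?thesis by auto
qed


theorem corollary3p10:
  fixes d :: nat
  assumes "d \<ge> 1"
  shows "(\<exists>K. simplicial_complex K \<and> f_poly K = eulerian_poly d) \<and>
         (\<exists>K. simplicial_complex K \<and> f_poly K = stirling2_poly d) \<and>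
         (\<exists>K. simplicial_complex K \<and> f_poly K = derangement_poly d)"
  using eulerian_part[OF assms] stirling_part[OF assms] derangement_part[OF assms] by (intro conjI)

end
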